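(* Let $x\in(0,1)$ be irrational. Every principal convergent of the OOCF expansion of $x$ is an intermediate convergent of the regular continued fraction of $x$; that is, for every $k\ge1$ there exist $n\ge1$ and $1\le j\le d_n$ with $p_k/q_k=\frac{p^R_{n-2}+jp^R_{n-1}}{q^R_{n-2}+jq^R_{n-1}}$.
   Context: Regular continued fraction (RCF): $x=[0;d_1,d_2,\dots]=\cfrac{1}{d_1+\cfrac{1}{d_2+\cdots}}$, $d_j\in\mathbb N$; convergents $p^R_n/q^R_n$ defined by $p^R_{-1}=1$, $q^R_{-1}=0$, $p^R_0=0$, $q^R_0=1$, $p^R_n=d_np^R_{n-1}+p^R_{n-2}$, $q^R_n=d_nq^R_{n-1}+q^R_{n-2}$. Intermediate convergents: $\frac{p^R_{n-2}+jp^R_{n-1}}{q^R_{n-2}+jq^R_{n-1}}$ for $n\ge1$, $1\le j\le d_n$. OOCF: digits $D=\{(1,1)\}\cup\{(a,\varepsilon):a\ge2,\ \varepsilon=\pm1\}$; $B(k+1,-1)=[\frac{k-1}{k},\frac{2k-1}{2k+1}]$, $B(k,1)=[\frac{2k-1}{2k+1},\frac{k}{k+1}]$ ($k\ge1$); $T(x)=\frac{kx-(k-1)}{k-(k+1)x}$ on $B(k+1,-1)$, $T(x)=\frac{k-(k+1)x}{kx-(k-1)}$ on $B(k,1)$, $T(1)=1$. The OOCF expansion of irrational $x\in(0,1)$ is the unique sequence $(a_n,\varepsilon_n)\in D$ with $T^{n-1}(x)\in B(a_n,\varepsilon_n)$ for all $n\ge1$; its $k$-th principal convergent is $p_k/q_k=1-\cfrac{1}{a_1+\cfrac{\varepsilon_1}{2-\cfrac{1}{\ddots\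 \cfrac{\varepsilon_{k-1}}{2-\cfrac{1}{a_k+\varepsilon_k/2}}}}}$. *)

theory Defs
  imports Complex_Main
begin

definition gauss_map :: "real \<Rightarrow> real" where
  "gauss_map x = frac (1 / x)"

definition rcf_digit :: "real \<Rightarrow> nat \<Rightarrow> nat" where
  "rcf_digit x n = nat \<lfloor>1 / ((gauss_map ^^ (n - 1)) x)\<rfloor>"

text \<open>Shifted convergents: rcfP x m = p^R_(m-1), rcfQ x m = q^R_(m-1), for m >= 0.
  So rcfP x 0 = p^R_(-1) = 1, rcfP x 1 = p^R_0 = 0, and
  p^R_n = d_n p^R_(n-1) + p^R_(n-2).\<close>
fun rcfP :: "real \<Rightarrow> nat \<Rightarrow> int" where
  "rcfP x 0 = 1"
| "rcfP x (Suc 0) = 0"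
| "rcfP x (Suc (Suc n)) = int (rcf_digit x (Suc n)) * rcfP x (Suc n) + rcfP x n"

fun rcfQ :: "real \<Rightarrow> nat \<Rightarrow> int" where
  "rcfQ x 0 = 0"
| "rcfQ x (Suc 0) = 1"
| "rcfQ x (Suc (Suc n)) = int (rcf_digit x (Suc n)) * rcfQ x (Suc n) + rcfQ x n"

definition oocf_D :: "(nat \<times> int) set" where
  "oocf_D = {(1, 1)} \<union> {(a, e). a \<ge> 2 \<and> (e = 1 \<or> e = -1)}"

definition oocf_B :: "nat \<Rightarrow> int \<Rightarrow> real set" where
  "oocf_B a e =
     (if e = -1 then (let k = real a - 1 in {(k - 1) / k .. (2*k - 1) / (2*k + 1)})
      else (let k = real a in {(2*k - 1) / (2*k + 1) .. k / (k + 1)}))"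

text \<open>The OOCF map T.  At points lying in two cylinders the formulas agree,
  so choosing any admissible cylinder is harmless.\<close>
definition oocf_T :: "real \<Rightarrow> real" where
  "oocf_T x =
     (if x = 1 then 1 else
      (let (a, e) = (SOME (a, e). (a, e) \<in> oocf_D \<and> x \<in> oocf_B a e) in
       if e = -1 then (let k = real a - 1 in (k * x - (k - 1)) / (k - (k + 1) * x))
       else (let k = real a in (k - (k + 1) * x) / (k * x - (k - 1)))))"

definition oocf_digit :: "real \<Rightarrow> nat \<Rightarrow> nat \<times> int" where
  "oocf_digit x n = (THE d. d \<in> oocf_D \<and> (oocf_T ^^ (n - 1)) x \<in> oocf_B (fst d) (snd d))"

fun oocf_tail :: "real \<Rightarrow> nat \<Rightarrow> nat \<Rightarrow> real" where
  "oocf_tail x m 0 = real (fst (oocf_digit x m)) + real_of_int (snd (oocf_digit x m)) / 2"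
| "oocf_tail x m (Suc r) = real (fst (oocf_digit x m))
      + real_of_int (snd (oocf_digit x m)) / (2 - 1 / oocf_tail x (Suc m) r)"

definition oocf_conv :: "real \<Rightarrow> nat \<Rightarrow> real" where
  "oocf_conv x k = 1 - 1 / oocf_tail x 1 (k - 1)"

end

theory Submission
  imports Defs
begin


definition irr01 :: "real \<Rightarrow> bool" where
  "irr01 x \<longleftrightarrow> 0 < x \<and> x < 1 \<and> x \<notin> \<rat>"

definition Iv :: "real \<Rightarrow> nat \<Rightarrow> nat \<Rightarrow> real" where
  "Iv x n j = real_of_int (rcfP x (n - 1) + int j * rcfP x n) /
             real_of_int (rcfQ x (n - 1) + int j * rcfQ x n)"

lemma inv_irr: "x \<notin> \<rat> \<Longrightarrow> 1 / x \<notin> \<rat>"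
proof
  assume "x \<notin> \<rat>" "1/x \<in> \<rat>"
  then have "1 / (1/x) \<in> \<rat>" using Rats_divide[OF Rats_1] by blast
  then show False using \<open>x \<notin> \<rat>\<close> by simp
qed

lemma frac_irr: "y \<notin> \<rat> \<Longrightarrow> frac y \<notin> \<rat>"
proof
  assume "y \<notin> \<rat>" "frac y \<in> \<rat>"
  then have "frac y + of_int \<lfloor>y\<rfloor> \<in> \<rat>" by (simp add: Rats_add)
  then show False using \<open>y \<notin> \<rat>\<close> by (simp add: frac_def)
qed

lemma G_irr: assumes "irr01 x" shows "irr01 (gauss_map x)"
proof -
  have x: "0 < x" "x < 1" "x \<notin> \<rat>" using assms by (auto simp: irr01_def)
  have "frac (1/x) \<notin> \<rat>" using frac_irr[OF inv_irr[OF x(3)]] .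
  moreover have "frac (1/x) \<noteq> 0" using calculation by (metis Rats_0)
  moreover have "frac (1/x) \<ge> 0" "frac (1/x) < 1" by (auto simp: frac_lt_1)
  ultimately show ?thesis by (auto simp: irr01_def gauss_map_def)
qed

lemma Gn_irr: "irr01 x \<Longrightarrow> irr01 ((gauss_map ^^ n) x)"
  by (induction n) (auto simp: G_irr)

lemma digit1_ge: assumes "irr01 x" shows "rcf_digit x 1 \<ge> 1"
proof -
  have "0 < x" "x < 1" using assms by (auto simp: irr01_def)
  then have "1 / x > 1" by simp
  then have "\<lfloor>1/x\<rfloor> \<ge> 1" by (simp add: one_le_floor)
  then have "nat \<lfloor>1/x\<rfloor> \<ge> 1" by linarith
  then show ?thesis by (simp add: rcf_digit_def)
qed

lemma digit_shift: "n \<ge> 1 \<Longrightarrow> rcf_digit x (Suc n) = rcf_digit (gauss_map x) n"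
  unfolding rcf_digit_def
  by (metis Suc_diff_1 diff_Suc_1 funpow_Suc_right le_less_Suc_eq less_one not_less o_apply zero_less_Suc)

lemma digit_ge: assumes "irr01 x" "n \<ge> 1" shows "rcf_digit x n \<ge> 1"
proof -
  have "rcf_digit x n = rcf_digit ((gauss_map ^^ (n-1)) x) 1"
    by (simp add: rcf_digit_def)
  then show ?thesis using digit1_ge[OF Gn_irr[OF assms(1)]] by simp
qed

lemma digit1_decomp: assumes "irr01 x"
  shows "x = 1 / (real (rcf_digit x 1) + gauss_map x)"
proof -
  have "0 < x" using assms by (auto simp: irr01_def)
  have "\<lfloor>1/x\<rfloor> \<ge> 0" using \<open>0<x\<close> by simp
  then have "real (rcf_digit x 1) = of_int \<lfloor>1/x\<rfloor>" by (simp add: rcf_digit_def)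
  then have "real (rcf_digit x 1) + gauss_map x = 1/x" by (simp add: gauss_map_def frac_def)
  then show ?thesis using \<open>0<x\<close> by simp
qed

lemma step_build: assumes "irr01 z" "m \<ge> 1" "x = 1 / (real m + z)"
  shows "irr01 x" "gauss_map x = z" "rcf_digit x 1 = m"
proof -
  have z: "0 < z" "z < 1" "z \<notin> \<rat>" using assms by (auto simp: irr01_def)
  have mr: "real m \<ge> 1" using assms(2) by simp
  have ix: "1/x = real m + z" using assms(3) z mr by simp
  have fl: "\<lfloor>1/x\<rfloor> = int m" unfolding ix using z by (simp add: floor_unique)
  show "gauss_map x = z" unfolding gauss_map_def frac_def using fl ix by simp
  show "rcf_digit x 1 = m" by (simp add: rcf_digit_def fl)
  have "real m + z \<notin> \<rat>"
  proof
    assume "real m + z \<in> \<rat>"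
    then have "real m + z - real m \<in> \<rat>" using Rats_diff[OF _ Rats_of_nat] by blast
    then show False using z by simp
  qed
  then have "x \<notin> \<rat>" using inv_irr assms(3) by auto
  moreover have "0 < x" using assms(3) z mr by simp
  moreover have "x < 1" using assms(3) z mr by simp
  ultimately show "irr01 x" by (simp add: irr01_def)
qed

lemma Q_pos: assumes "irr01 x" shows "rcfQ x n \<ge> 0 \<and> rcfQ x (Suc n) \<ge> 1"
proof (induction n)
  case 0 then show ?case by simp
next
  case (Suc n)
  have "rcf_digit x (Suc n) \<ge> 1" using digit_ge[OF assms] by simp
  then have "int (rcf_digit x (Suc n)) * rcfQ x (Suc n) \<ge> 1" using Suc
    by (metis mult_le_cancel_right1 of_nat_1 of_nat_le_iff order_trans zero_less_one_class.zero_le_one dual_order.strict_trans2 less_one not_le)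
  then show ?case using Suc by simp
qed

lemma P_pos: assumes "irr01 x" shows "rcfP x (Suc (Suc n)) \<ge> 1 \<and> rcfP x (Suc n) \<ge> 0"
proof (induction n)
  case 0 then show ?case by simp
next
  case (Suc n)
  have "rcf_digit x (Suc (Suc n)) \<ge> 1" using digit_ge[OF assms] by simp
  then have "int (rcf_digit x (Suc (Suc n))) * rcfP x (Suc (Suc n)) \<ge> 1" using Suc
    by (metis mult_le_cancel_right1 of_nat_1 of_nat_le_iff order_trans zero_less_one_class.zero_le_one dual_order.strict_trans2 less_one not_le)
  then show ?case using Suc by simp
qed

lemma P_nonneg: assumes "irr01 x" shows "rcfP x n \<ge> 0"
  using P_pos[OF assms] by (cases n) auto

lemma PQ_shift:
  "rcfP x (Suc i) = rcfQ (gauss_map x) i \<and>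
   rcfQ x (Suc i) = int (rcf_digit x 1) * rcfQ (gauss_map x) i + rcfP (gauss_map x) i"
proof -
  have "\<forall>i'\<in>{i, Suc i}. rcfP x (Suc i') = rcfQ (gauss_map x) i' \<and>
   rcfQ x (Suc i') = int (rcf_digit x 1) * rcfQ (gauss_map x) i' + rcfP (gauss_map x) i'"
  proof (induction i)
    case 0 then show ?case by simp
  next
    case (Suc i)
    have d: "rcf_digit x (Suc (Suc i)) = rcf_digit (gauss_map x) (Suc i)"
      using digit_shift[of "Suc i" x] by simp
    have e: "rcfP x (Suc i) = rcfQ (gauss_map x) i" "rcfQ x (Suc i) = int (rcf_digit x 1) * rcfQ (gauss_map x) i + rcfP (gauss_map x) i"
      "rcfP x (Suc (Suc i)) = rcfQ (gauss_map x) (Suc i)" "rcfQ x (Suc (Suc i)) = int (rcf_digit x 1) * rcfQ (gauss_map x) (Suc i) + rcfP (gauss_map x) (Suc i)"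
      using Suc by auto
    have f1: "rcfP x (Suc (Suc (Suc i))) = int (rcf_digit x (Suc (Suc i))) * rcfP x (Suc (Suc i)) + rcfP x (Suc i)"
      by (rule rcfP.simps(3))
    have f2: "rcfQ x (Suc (Suc (Suc i))) = int (rcf_digit x (Suc (Suc i))) * rcfQ x (Suc (Suc i)) + rcfQ x (Suc i)"
      by (rule rcfQ.simps(3))
    have f3: "rcfP (gauss_map x) (Suc (Suc i)) = int (rcf_digit (gauss_map x) (Suc i)) * rcfP (gauss_map x) (Suc i) + rcfP (gauss_map x) i"
      by (rule rcfP.simps(3))
    have f4: "rcfQ (gauss_map x) (Suc (Suc i)) = int (rcf_digit (gauss_map x) (Suc i)) * rcfQ (gauss_map x) (Suc i) + rcfQ (gauss_map x) i"
      by (rule rcfQ.simps(3))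
    have "rcfP x (Suc (Suc (Suc i))) = rcfQ (gauss_map x) (Suc (Suc i))"
      unfolding f1 f4 e(3) e(1) d by simp
    moreover have "rcfQ x (Suc (Suc (Suc i))) = int (rcf_digit x 1) * rcfQ (gauss_map x) (Suc (Suc i)) + rcfP (gauss_map x) (Suc (Suc i))"
      unfolding f2 f3 f4 e(2) e(4) d by (simp add: algebra_simps)
    ultimately show ?case using e(3) e(4) by simp
  qed
  then show ?thesis by simp
qed

lemma Iv_one: "Iv x 1 j = 1 / real j"
  by (simp add: Iv_def)

lemma Iv_shift: assumes "irr01 x" "n \<ge> 1" "j \<ge> 1"
  shows "Iv x (Suc n) j = 1 / (real (rcf_digit x 1) + Iv (gauss_map x) n j)"
proof -
  define z where "z = gauss_map x"
  define m where "m = rcf_digit x 1"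
  have z: "irr01 z" using G_irr[OF assms(1)] z_def by simp
  define A where "A = rcfQ z (n-1) + int j * rcfQ z n"
  define B where "B = rcfP z (n-1) + int j * rcfP z n"
  have n1: "Suc (n-1) = n" using assms(2) by simp
  have s1: "rcfP x n = rcfQ z (n-1)" "rcfQ x n = int m * rcfQ z (n-1) + rcfP z (n-1)"
    using PQ_shift[of x "n-1"] n1 by (simp_all add: z_def m_def)
  have s2: "rcfP x (Suc n) = rcfQ z n" "rcfQ x (Suc n) = int m * rcfQ z n + rcfP z n"
    using PQ_shift[of x n] by (simp_all add: z_def m_def)
  have Apos: "A \<ge> 1"
  proof -
    have "rcfQ z n \<ge> 1" using Q_pos[OF z, of "n-1"] n1 by simp
    moreover have "rcfQ z (n-1) \<ge> 0" using Q_pos[OF z] by simp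
    moreover have "int j * rcfQ z n \<ge> rcfQ z n" using assms(3) calculation(1)
      by (simp add: mult_le_cancel_right1)
    ultimately show ?thesis unfolding A_def by linarith
  qed
  have Bnn: "B \<ge> 0" unfolding B_def using P_nonneg[OF z] by simp
  have "Iv x (Suc n) j = real_of_int A / (real m * real_of_int A + real_of_int B)"
    unfolding Iv_def A_def B_def using s1 s2 by (simp add: algebra_simps)
  also have "\<dots> = 1 / (real m + real_of_int B / real_of_int A)"
    using Apos Bnn by (simp add: field_simps)
  also have "real_of_int B / real_of_int A = Iv z n j" unfolding Iv_def A_def B_def by simp
  finally show ?thesis by (simp add: m_def z_def)
qed

lemma Iv_pos: assumes "irr01 x" "n \<ge> 1" "j \<ge> 1" shows "Iv x n j > 0"
proof -
  have n1: "Suc (n-1) = n" using assms(2) by simp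
  have Q: "rcfQ x n \<ge> 1" "rcfQ x (n-1) \<ge> 0" using Q_pos[OF assms(1), of "n-1"] n1 by auto
  have num: "rcfP x (n - 1) + int j * rcfP x n \<ge> 1"
  proof (cases "n = 1")
    case True then show ?thesis by simp
  next
    case False
    then have "rcfP x n \<ge> 1" using P_pos[OF assms(1), of "n-2"] assms(2)
      by (metis Suc_diff_Suc Suc_pred le_neq_implies_less diff_Suc_1 less_one not_le numeral_2_eq_2 zero_less_Suc le_add_diff_inverse2 One_nat_def)
    moreover have "rcfP x (n-1) \<ge> 0" using P_nonneg[OF assms(1)] by simp
    moreover have "int j * rcfP x n \<ge> rcfP x n" using assms(3) calculation(1)
      by (simp add: mult_le_cancel_right1)
    ultimately show ?thesis by linarith
  qed
  have den: "rcfQ x (n - 1) + int j * rcfQ x n \<ge> 1"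
  proof -
    have "int j * rcfQ x n \<ge> rcfQ x n" using assms(3) Q by (simp add: mult_le_cancel_right1)
    then show ?thesis using Q by linarith
  qed
  have "real_of_int (rcfP x (n - 1) + int j * rcfP x n) > 0" using num by linarith
  moreover have "real_of_int (rcfQ x (n - 1) + int j * rcfQ x n) > 0" using den by linarith
  ultimately show ?thesis unfolding Iv_def by (rule divide_pos_pos)
qed



definition psi :: "nat \<Rightarrow> int \<Rightarrow> real \<Rightarrow> real" where
  "psi a e t = 1 - 1 / (real a + real_of_int e / (1 + t))"

lemma psi_rat: "x = psi a e y \<Longrightarrow> y \<in> \<rat> \<Longrightarrow> x \<in> \<rat>"
  unfolding psi_def
  by (metis Rats_1 Rats_add Rats_diff Rats_divide Rats_of_int Rats_of_nat)

lemma psi11: "t > -1 \<Longrightarrow> psi 1 1 t = 1 / (2 + t)"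
  unfolding psi_def by (simp add: field_simps)

lemma aux1: "q > 0 \<Longrightarrow> 1 - 1 / (q + 1) = 1 / (1 + 1 / (q::real))"
  by (simp add: field_simps)

lemma psia1: "a \<ge> 2 \<Longrightarrow> t \<ge> 0 \<Longrightarrow> psi a 1 t = 1 / (1 + 1 / (real (a - 1) + 1 / (1 + t)))"
proof -
  assume a: "a \<ge> 2" "t \<ge> 0"
  define q where "q = real (a - 1) + 1 / (1 + t)"
  have q: "q > 0" unfolding q_def using a by (simp add: add_pos_nonneg)
  have "real a + 1 / (1 + t) = q + 1" unfolding q_def using a by (simp add: of_nat_diff)
  then have "psi a 1 t = 1 - 1 / (q + 1)" unfolding psi_def by simp
  then show ?thesis using aux1[OF q] q_def by simp
qed

lemma psi2m: "t > 0 \<Longrightarrow> psi 2 (-1) t = 1 / (2 + 1 / t)"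
  unfolding psi_def by (simp add: field_simps)

lemma psiam: "a \<ge> 3 \<Longrightarrow> t > 0 \<Longrightarrow> psi a (-1) t = 1 / (1 + 1 / (real (a - 2) + 1 / (1 + 1 / t)))"
proof -
  assume a: "a \<ge> 3" "t > 0"
  define q where "q = real (a - 2) + 1 / (1 + 1 / t)"
  have q: "q > 0" unfolding q_def using a by (simp add: add_pos_nonneg)
  have "1 / (1 + 1 / t) = 1 - 1 / (1 + t)" using a by (simp add: field_simps)
  then have "real a + real_of_int (-1) / (1 + t) = q + 1" unfolding q_def using a by (simp add: of_nat_diff)
  then have "psi a (-1) t = 1 - 1 / (q + 1)" unfolding psi_def by simp
  then show ?thesis using aux1[OF q] q_def by simp
qed

lemma irr_pos: "irr01 y \<Longrightarrow> y > 0" by (simp add: irr01_def)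

lemma psi_case:
  assumes y: "irr01 y" and D: "(a, e) \<in> oocf_D" and x: "x = psi a e y"
    and n: "n \<ge> 1" and j: "1 \<le> j" "j \<le> rcf_digit y n"
  shows "\<exists>n'\<ge>1. \<exists>j'. 1 \<le> j' \<and> j' \<le> rcf_digit x n' \<and> psi a e (Iv y n j) = Iv x n' j'"
proof -
  define t where "t = Iv y n j"
  have t: "t > 0" unfolding t_def using Iv_pos[OF y n j(1)] .
  have ypos: "y > 0" using y by (simp add: irr01_def)
  define c where "c = rcf_digit y 1"
  define y' where "y' = gauss_map y"
  have c: "c \<ge> 1" unfolding c_def using digit1_ge[OF y] .
  have y': "irr01 y'" unfolding y'_def using G_irr[OF y] .
  have ydec: "y = 1 / (real c + y')" unfolding c_def y'_def using digit1_decomp[OF y] .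
  consider "a = 1" "e = 1" | "a \<ge> 2" "e = 1" | "a = 2" "e = -1" | "a \<ge> 3" "e = -1"
    using D unfolding oocf_D_def by fastforce
  then show ?thesis
  proof cases
    case 1
    have xd: "x = 1 / (real 2 + y)" using x 1 psi11[of y] ypos by simp
    note sx = step_build[OF y _ xd, simplified]
    have "psi a e t = 1 / (real (rcf_digit x 1) + Iv (gauss_map x) n j)"
      using 1 psi11[of t] t sx t_def by simp
    also have "\<dots> = Iv x (Suc n) j" using Iv_shift[OF sx(1) n j(1)] by simp
    finally show ?thesis using digit_shift[OF n, of x] sx j unfolding t_def
      by (intro exI[of _ "Suc n"] exI[of _ j]) auto
  next
    case 2
    define v where "v = 1 / (real 1 + y)"
    define w where "w = 1 / (real (a - 1) + v)"
    note sv = step_build[OF y _ v_def, simplified]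
    have a1: "1 \<le> a - 1" using 2 by simp
    note sw = step_build[OF sv(1) a1 w_def]
    have xd: "x = 1 / (real 1 + w)" using x 2 psia1[of a y] ypos unfolding w_def v_def by simp
    note sx = step_build[OF sw(1) _ xd, simplified]
    have "psi a e t = 1 / (real 1 + 1 / (real (a - 1) + 1 / (real 1 + t)))"
      using 2 psia1[of a t] t by simp
    also have "1 / (real 1 + t) = Iv v (Suc n) j"
      using Iv_shift[OF sv(1) n j(1)] sv t_def by simp
    also have "1 / (real (a - 1) + Iv v (Suc n) j) = Iv w (Suc (Suc n)) j"
      using Iv_shift[OF sw(1) _ j(1), of "Suc n"] sw 2 by simp
    also have "1 / (real 1 + Iv w (Suc (Suc n)) j) = Iv x (Suc (Suc (Suc n))) j"
      using Iv_shift[OF sx(1) _ j(1), of "Suc (Suc n)"] sx by simp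
    finally have eq: "psi a e t = Iv x (Suc (Suc (Suc n))) j" .
    have "rcf_digit x (Suc (Suc (Suc n))) = rcf_digit y n"
      using digit_shift[of "Suc (Suc n)" x] digit_shift[of "Suc n" w] digit_shift[OF n, of v] sx sw sv 2
      by simp
    then show ?thesis using eq j unfolding t_def
      by (intro exI[of _ "Suc (Suc (Suc n))"] exI[of _ j]) auto
  next
    case 3
    have xd: "x = 1 / (real (c + 2) + y')"
    proof -
      have "x = 1 / (2 + 1 / y)" using x 3 psi2m[of y] ypos by simp
      also have "1 / y = real c + y'" using ydec by simp
      finally show ?thesis by simp
    qed
    note sx = step_build[OF y' _ xd, simplified]
    show ?thesis
    proof (cases "n = 1")
      case True
      have "psi a e t = 1 / (2 + real j)" using 3 psi2m[of t] t True t_def Iv_one by simp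
      also have "\<dots> = Iv x 1 (j + 2)" using Iv_one by simp
      finally show ?thesis using sx j True c_def unfolding t_def
        by (intro exI[of _ 1] exI[of _ "j+2"]) auto
    next
      case False
      then obtain n0 where n0: "n = Suc n0" "n0 \<ge> 1" using n by (cases n) auto
      have ty: "t = 1 / (real c + Iv y' n0 j)"
        using Iv_shift[OF y n0(2) j(1)] n0 t_def c_def y'_def by simp
      have "psi a e t = 1 / (2 + (real c + Iv y' n0 j))"
        using 3 psi2m[of t] t ty by simp
      also have "\<dots> = 1 / (real (c + 2) + Iv y' n0 j)" by simp
      also have "\<dots> = Iv x (Suc n0) j" using Iv_shift[OF sx(1) n0(2) j(1)] sx by simp
      finally have eq: "psi a e t = Iv x n j" using n0 by simp
      have "rcf_digit x n = rcf_digit y n"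
        using digit_shift[OF n0(2), of x] digit_shift[OF n0(2), of y] sx n0 y'_def by simp
      then show ?thesis using eq j n unfolding t_def
        by (intro exI[of _ n] exI[of _ j]) auto
    qed
  next
    case 4
    define v where "v = 1 / (real (1 + c) + y')"
    define w where "w = 1 / (real (a - 2) + v)"
    note sv = step_build[OF y' _ v_def, simplified]
    have a1: "1 \<le> a - 2" using 4 by simp
    note sw = step_build[OF sv(1) a1 w_def]
    have xd: "x = 1 / (real 1 + w)"
    proof -
      have "x = 1 / (1 + 1 / (real (a - 2) + 1 / (1 + 1 / y)))" using x 4 psiam[of a y] ypos by simp
      also have "1 + 1 / y = real (1 + c) + y'" using ydec by simp
      finally show ?thesis unfolding w_def v_def by simp
    qed
    note sx = step_build[OF sw(1) _ xd, simplified]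
    have pt: "psi a e t = 1 / (real 1 + 1 / (real (a - 2) + 1 / (1 + 1 / t)))"
      using 4 psiam[of a t] t by simp
    show ?thesis
    proof (cases "n = 1")
      case True
      have "1 / (1 + 1 / t) = Iv v 1 (j + 1)" using True t_def Iv_one by (simp add: add.commute)
      then have "psi a e t = 1 / (real 1 + 1 / (real (a - 2) + Iv v 1 (j + 1)))" using pt by simp
      also have "1 / (real (a - 2) + Iv v 1 (j + 1)) = Iv w 2 (j + 1)"
        using Iv_shift[OF sw(1), of 1 "j+1"] sw 4 by (simp add: numeral_2_eq_2)
      also have "1 / (real 1 + Iv w 2 (j + 1)) = Iv x 3 (j + 1)"
        using Iv_shift[OF sx(1), of 2 "j+1"] sx by (simp add: numeral_3_eq_3 numeral_2_eq_2)
      finally have eq: "psi a e t = Iv x 3 (j + 1)" .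
      have "rcf_digit x 3 = 1 + c"
        using digit_shift[of 2 x] digit_shift[of 1 w] sx sw sv 4
        by (simp add: numeral_3_eq_3 numeral_2_eq_2)
      then show ?thesis using eq j True c_def unfolding t_def
        by (intro exI[of _ 3] exI[of _ "j+1"]) auto
    next
      case False
      then obtain n0 where n0: "n = Suc n0" "n0 \<ge> 1" using n by (cases n) auto
      have ty: "t = 1 / (real c + Iv y' n0 j)"
        using Iv_shift[OF y n0(2) j(1)] n0 t_def c_def y'_def by simp
      have ipos: "Iv y' n0 j > 0" using Iv_pos[OF y' n0(2) j(1)] .
      have "1 / (1 + 1 / t) = 1 / (real (1 + c) + Iv y' n0 j)" using ty by simp
      also have "\<dots> = Iv v (Suc n0) j" using Iv_shift[OF sv(1) n0(2) j(1)] sv by simp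
      finally have "psi a e t = 1 / (real 1 + 1 / (real (a - 2) + Iv v (Suc n0) j))" using pt by simp
      also have "1 / (real (a - 2) + Iv v (Suc n0) j) = Iv w (Suc (Suc n0)) j"
        using Iv_shift[OF sw(1) _ j(1), of "Suc n0"] sw 4 by simp
      also have "1 / (real 1 + Iv w (Suc (Suc n0)) j) = Iv x (Suc (Suc (Suc n0))) j"
        using Iv_shift[OF sx(1) _ j(1), of "Suc (Suc n0)"] sx by simp
      finally have eq: "psi a e t = Iv x (Suc (Suc (Suc n0))) j" .
      have "rcf_digit x (Suc (Suc (Suc n0))) = rcf_digit y n"
        using digit_shift[of "Suc (Suc n0)" x] digit_shift[of "Suc n0" w] digit_shift[OF n0(2), of v]
          digit_shift[OF n0(2), of y] sx sw sv 4 n0 y'_def by simp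
      then show ?thesis using eq j unfolding t_def
        by (intro exI[of _ "Suc (Suc (Suc n0))"] exI[of _ j]) auto
    qed
  qed
qed



lemma one_minus_inv_le:
  fixes x \<alpha> :: real
  assumes "0 < x" "x < 1" "\<alpha> > 0"
  shows "1 - 1/\<alpha> < x \<longleftrightarrow> \<alpha> < 1/(1-x)"
proof -
  have "1 - 1/\<alpha> < x \<longleftrightarrow> 1 - x < 1/\<alpha>" by (intro iffI; linarith)
  also have "\<dots> \<longleftrightarrow> \<alpha> < 1/(1-x)" using assms
    by (simp add: pos_less_divide_eq mult.commute)
  finally show ?thesis .
qed

lemma one_minus_inv_ge:
  fixes x \<beta> :: real
  assumes "0 < x" "x < 1" "\<beta> > 0"
  shows "x < 1 - 1/\<beta> \<longleftrightarrow> 1/(1-x) < \<beta>"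
proof -
  have "x < 1 - 1/\<beta> \<longleftrightarrow> 1/\<beta> < 1 - x" by (intro iffI; linarith)
  also have "\<dots> \<longleftrightarrow> 1/(1-x) < \<beta>" using assms
    proof -
    have "1 - x > 0" using assms by simp
    then show ?thesis using assms(3) by (simp add: pos_divide_less_eq mult.commute)
  qed
  finally show ?thesis .
qed

lemma interval_u:
  fixes x \<alpha> \<beta> :: real
  assumes x: "0 < x" "x < 1" "x \<notin> \<rat>" and r: "\<alpha> \<in> \<rat>" "\<beta> \<in> \<rat>" and p: "\<alpha> > 0" "\<beta> > 0"
  shows "(1 - 1/\<alpha> \<le> x \<and> x \<le> 1 - 1/\<beta>) \<longleftrightarrow> (\<alpha> < 1/(1-x) \<and> 1/(1-x) < \<beta>)"
proof -
  have "1 - 1/\<alpha> \<in> \<rat>" "1 - 1/\<beta> \<in> \<rat>" using r by (simp_all add: Rats_diff Rats_divide)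
  then have "1 - 1/\<alpha> \<noteq> x" "x \<noteq> 1 - 1/\<beta>" using x(3) by auto
  then have "(1 - 1/\<alpha> \<le> x \<and> x \<le> 1 - 1/\<beta>) \<longleftrightarrow> (1 - 1/\<alpha> < x \<and> x < 1 - 1/\<beta>)" by (auto simp: order_le_less)
  then show ?thesis using one_minus_inv_le[OF x(1,2) p(1)] one_minus_inv_ge[OF x(1,2) p(2)] by simp
qed

lemma B_m1: "a \<ge> 2 \<Longrightarrow> oocf_B a (-1) = {1 - 1/(real a - 1) .. 1 - 1/(real a - 1/2)}"
  unfolding oocf_B_def Let_def by (simp add: field_simps)

lemma B_p1: "a \<ge> 1 \<Longrightarrow> oocf_B a 1 = {1 - 1/(real a + 1/2) .. 1 - 1/(real a + 1)}"
  unfolding oocf_B_def Let_def by (simp add: field_simps)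

lemma valid_iff:
  assumes x: "irr01 x"
  shows "((a, e) \<in> oocf_D \<and> x \<in> oocf_B a e) \<longleftrightarrow>
    ((e = 1 \<and> a \<ge> 1 \<and> real a + 1/2 < 1/(1-x) \<and> 1/(1-x) < real a + 1) \<or>
     (e = -1 \<and> a \<ge> 2 \<and> real a - 1 < 1/(1-x) \<and> 1/(1-x) < real a - 1/2))"
proof -
  have xx: "0 < x" "x < 1" "x \<notin> \<rat>" using x by (auto simp: irr01_def)
  have D: "(a, e) \<in> oocf_D \<longleftrightarrow> (e = 1 \<and> a \<ge> 1) \<or> (e = -1 \<and> a \<ge> 2)"
    unfolding oocf_D_def by auto
  have m1: "a \<ge> 2 \<Longrightarrow> x \<in> oocf_B a (-1) \<longleftrightarrow> (real a - 1 < 1/(1-x) \<and> 1/(1-x) < real a - 1/2)"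
    using B_m1 interval_u[OF xx, of "real a - 1" "real a - 1/2"] by simp
  have p1: "a \<ge> 1 \<Longrightarrow> x \<in> oocf_B a 1 \<longleftrightarrow> (real a + 1/2 < 1/(1-x) \<and> 1/(1-x) < real a + 1)"
    using B_p1 interval_u[OF xx, of "real a + 1/2" "real a + 1"] by simp
  show ?thesis using D m1 p1 by auto
qed

lemma u_props: assumes "irr01 x" shows "1/(1-x) > 1" "1/(1-x) \<notin> \<rat>"
proof -
  have xx: "0 < x" "x < 1" "x \<notin> \<rat>" using assms by (auto simp: irr01_def)
  show "1/(1-x) > 1" using xx by simp
  have "1 - x \<notin> \<rat>"
  proof
    assume "1 - x \<in> \<rat>"
    then have "1 - (1 - x) \<in> \<rat>" using Rats_diff[OF Rats_1] by blast
    then show False using xx by simp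
  qed
  then show "1/(1-x) \<notin> \<rat>" by (rule inv_irr)
qed

lemma valid_unique:
  assumes x: "irr01 x"
    and v1: "(a, e) \<in> oocf_D \<and> x \<in> oocf_B a e"
    and v2: "(a', e') \<in> oocf_D \<and> x \<in> oocf_B a' e'"
  shows "(a, e) = (a', e')"
proof -
  define u where "u = 1/(1-x)"
  note c1 = v1[unfolded valid_iff[OF x], folded u_def]
  note c2 = v2[unfolded valid_iff[OF x], folded u_def]
  have neq: "\<And>b b' :: nat. real b < real b' + 1 \<Longrightarrow> real b' < real b + 1 \<Longrightarrow> b = b'"
  proof -
    fix b b' :: nat
    assume "real b < real b' + 1" "real b' < real b + 1"
    then have "real b < real (b' + 1)" "real b' < real (b + 1)" by simp_all
    then have "b < b' + 1" "b' < b + 1" by (simp_all only: of_nat_less_iff)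
    then show "b = b'" by simp
  qed
  have nlt: "\<And>b b' :: nat. real b + 1 < real b' \<Longrightarrow> real b' < real b + 2 \<Longrightarrow> False"
  proof -
    fix b b' :: nat
    assume "real b + 1 < real b'" "real b' < real b + 2"
    then have "real (b + 1) < real b'" "real b' < real (b + 2)" by simp_all
    then have "b + 1 < b'" "b' < b + 2" by (simp_all only: of_nat_less_iff)
    then show False by simp
  qed
  from c1 c2 show ?thesis
  proof (elim disjE conjE)
    assume "e = 1" "e' = 1" "real a + 1/2 < u" "u < real a + 1" "real a' + 1/2 < u" "u < real a' + 1"
    then show ?thesis using neq[of a a'] by auto
  next
    assume "e = -1" "e' = -1" "real a - 1 < u" "u < real a - 1/2" "real a' - 1 < u" "u < real a' - 1/2"
    then show ?thesis using neq[of a a'] by auto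
  next
    assume "real a + 1/2 < u" "u < real a + 1" "real a' - 1 < u" "u < real a' - 1/2"
    then show ?thesis using nlt[of a a'] by auto
  next
    assume "real a' + 1/2 < u" "u < real a' + 1" "real a - 1 < u" "u < real a - 1/2"
    then show ?thesis using nlt[of a' a] by auto
  qed
qed

lemma valid_exists:
  assumes x: "irr01 x"
  shows "\<exists>a e. (a, e) \<in> oocf_D \<and> x \<in> oocf_B a e"
proof -
  define u where "u = 1/(1-x)"
  have u: "u > 1" "u \<notin> \<rat>" using u_props[OF x] u_def by auto
  define f where "f = \<lfloor>u\<rfloor>"
  have f1: "f \<ge> 1" unfolding f_def using u by (simp add: one_le_floor)
  have fb: "real_of_int f \<le> u" "u < real_of_int f + 1" unfolding f_def by linarith+
  have fa: "real (nat f) = real_of_int f" using f1 by simp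
  have "u \<noteq> real_of_int f + 1/2"
  proof
    assume "u = real_of_int f + 1/2"
    then have "u \<in> \<rat>" by (simp add: Rats_add)
    then show False using u by simp
  qed
  moreover have "u \<noteq> real_of_int f" using u by auto
  ultimately consider "real_of_int f + 1/2 < u" | "real_of_int f < u" "u < real_of_int f + 1/2"
    using fb by linarith
  then show ?thesis
  proof cases
    case 1
    have "(nat f, 1) \<in> oocf_D \<and> x \<in> oocf_B (nat f) 1"
      unfolding valid_iff[OF x] using 1 fb f1 fa u_def by auto
    then show ?thesis by blast
  next
    case 2
    have "real (nat f + 1) = real_of_int f + 1" using fa by simp
    then have "(nat f + 1, -1) \<in> oocf_D \<and> x \<in> oocf_B (nat f + 1) (-1)"
      unfolding valid_iff[OF x] using 2 f1 u_def by auto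
    then show ?thesis by blast
  qed
qed

lemma Tform:
  fixes u k :: real
  assumes "u > 0" "u \<noteq> k" "k + 1 \<noteq> u"
  shows "(k - (k+1)*(1-1/u))/(k*(1-1/u) - (k-1)) = (k+1-u)/(u-k)"
    "(k*(1-1/u) - (k-1))/(k - (k+1)*(1-1/u)) = (u-k)/(k+1-u)"
proof -
  have n: "k - (k+1)*(1-1/u) = (k+1-u)/u" using assms by (simp add: field_simps)
  have d: "k*(1-1/u) - (k-1) = (u-k)/u" using assms by (simp add: field_simps)
  show "(k - (k+1)*(1-1/u))/(k*(1-1/u) - (k-1)) = (k+1-u)/(u-k)"
    unfolding n d using assms by simp
  show "(k*(1-1/u) - (k-1))/(k - (k+1)*(1-1/u)) = (u-k)/(k+1-u)"
    unfolding n d using assms by simp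
qed

lemma valid_props:
  assumes x: "irr01 x" and v: "(a, e) \<in> oocf_D \<and> x \<in> oocf_B a e"
  shows "irr01 (oocf_T x) \<and> x = psi a e (oocf_T x)"
proof -
  have xx: "0 < x" "x < 1" "x \<notin> \<rat>" using x by (auto simp: irr01_def)
  define u where "u = 1/(1-x)"
  have xu: "x = 1 - 1/u" unfolding u_def using xx by simp
  have u: "u > 1" using u_props[OF x] u_def by auto
  have ex: "\<exists>p. (case p of (a, e) \<Rightarrow> (a, e) \<in> oocf_D \<and> x \<in> oocf_B a e)"
    using valid_exists[OF x] by auto
  obtain a' e' where ae': "(SOME p. case p of (a, e) \<Rightarrow> (a, e) \<in> oocf_D \<and> x \<in> oocf_B a e) = (a', e')"
    by fastforce
  have v': "(a', e') \<in> oocf_D \<and> x \<in> oocf_B a' e'"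
    using someI_ex[OF ex] ae' by simp
  have same: "(a', e') = (a, e)" using valid_unique[OF x v' v] .
  have T: "oocf_T x = (if e = -1 then (let k = real a - 1 in (k * x - (k - 1)) / (k - (k + 1) * x))
       else (let k = real a in (k - (k + 1) * x) / (k * x - (k - 1))))"
    unfolding oocf_T_def using xx ae' same by simp
  note c = v[unfolded valid_iff[OF x], folded u_def]
  from c consider "e = 1" "a \<ge> 1" "real a + 1/2 < u" "u < real a + 1"
    | "e = -1" "a \<ge> 2" "real a - 1 < u" "u < real a - 1/2" by blast
  then have yy: "0 < oocf_T x \<and> oocf_T x < 1 \<and> x = psi a e (oocf_T x)"
  proof cases
    case 1
    have "oocf_T x = (real a + 1 - u) / (u - real a)"
      unfolding T using 1 u Tform(1)[of u "real a"] xu by (simp add: Let_def)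
    moreover have "(real a + 1 - u) / (u - real a) > 0" using 1 by simp
    moreover have "(real a + 1 - u) / (u - real a) < 1" using 1 by (simp add: divide_less_eq)
    moreover have "psi a e ((real a + 1 - u) / (u - real a)) = 1 - 1/u"
      unfolding psi_def using 1 u by (simp add: field_simps)
    ultimately show ?thesis using xu by simp
  next
    case 2
    have "oocf_T x = (u - (real a - 1)) / (real a - 1 + 1 - u)"
      unfolding T using 2 u Tform(2)[of u "real a - 1"] xu by (simp add: Let_def)
    also have "\<dots> = (u - real a + 1) / (real a - u)" by (simp add: algebra_simps)
    finally have "oocf_T x = (u - real a + 1) / (real a - u)" .
    moreover have "(u - real a + 1) / (real a - u) > 0" using 2 by simp
    moreover have "(u - real a + 1) / (real a - u) < 1" using 2 by (simp add: divide_less_eq)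
    moreover have "psi a e ((u - real a + 1) / (real a - u)) = 1 - 1/u"
      unfolding psi_def using 2 u by (simp add: field_simps)
    ultimately show ?thesis using xu by simp
  qed
  then have "oocf_T x \<notin> \<rat>" using psi_rat xx(3) by blast
  then show ?thesis using yy by (simp add: irr01_def)
qed



lemma oocf_digit_shift: "m \<ge> 1 \<Longrightarrow> oocf_digit x (Suc m) = oocf_digit (oocf_T x) m"
proof -
  assume m: "m \<ge> 1"
  then have "(oocf_T ^^ m) x = (oocf_T ^^ (m - 1)) (oocf_T x)"
    by (metis Suc_diff_1 funpow_Suc_right le_numeral_extra(2) less_le_trans o_apply zero_less_one le_less)
  then show ?thesis unfolding oocf_digit_def by simp
qed

lemma tail_shift: "m \<ge> 1 \<Longrightarrow> oocf_tail x (Suc m) r = oocf_tail (oocf_T x) m r"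
proof (induction r arbitrary: m)
  case 0 then show ?case using oocf_digit_shift[OF 0] by simp
next
  case (Suc r)
  have "oocf_tail x (Suc (Suc m)) r = oocf_tail (oocf_T x) (Suc m) r" using Suc.IH by simp
  then show ?case using oocf_digit_shift[OF Suc.prems] by simp
qed

lemma digit1:
  assumes x: "irr01 x"
  shows "oocf_digit x 1 \<in> oocf_D \<and> x \<in> oocf_B (fst (oocf_digit x 1)) (snd (oocf_digit x 1))"
proof -
  obtain a e where v: "(a, e) \<in> oocf_D \<and> x \<in> oocf_B a e" using valid_exists[OF x] by blast
  have "oocf_digit x 1 = (a, e)"
    unfolding oocf_digit_def
  proof (simp, rule the_equality)
    show "(a, e) \<in> oocf_D \<and> x \<in> oocf_B (fst (a, e)) (snd (a, e))" using v by simp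
  next
    fix d assume d: "d \<in> oocf_D \<and> x \<in> oocf_B (fst d) (snd d)"
    then have "(fst d, snd d) \<in> oocf_D \<and> x \<in> oocf_B (fst d) (snd d)" by simp
    from valid_unique[OF x this v] show "d = (a, e)" by simp
  qed
  then show ?thesis using v by simp
qed

lemma conv1: "oocf_conv x 1 = psi (fst (oocf_digit x 1)) (snd (oocf_digit x 1)) 1"
  unfolding oocf_conv_def psi_def by simp

lemma convSS: "oocf_conv x (Suc (Suc r)) =
   psi (fst (oocf_digit x 1)) (snd (oocf_digit x 1)) (oocf_conv (oocf_T x) (Suc r))"
proof -
  have "oocf_tail x 2 r = oocf_tail (oocf_T x) 1 r" using tail_shift[of 1 x r] by (simp add: numeral_2_eq_2)
  moreover have "(2::real) - q = 1 + (1 - q)" for q by simp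
  ultimately show ?thesis unfolding oocf_conv_def psi_def by (simp add: numeral_2_eq_2)
qed

lemma main_ind:
  "\<forall>x. irr01 x \<longrightarrow> (\<exists>n\<ge>1. \<exists>j. 1 \<le> j \<and> j \<le> rcf_digit x n \<and> oocf_conv x (Suc k) = Iv x n j)"
proof (induction k)
  case 0
  show ?case
  proof (intro allI impI)
    fix x assume x: "irr01 x"
    obtain a e where ae: "oocf_digit x 1 = (a, e)" by fastforce
    have v: "(a, e) \<in> oocf_D \<and> x \<in> oocf_B a e" using digit1[OF x] ae by simp
    have vp: "irr01 (oocf_T x)" "x = psi a e (oocf_T x)" using valid_props[OF x v] by auto
    have d1: "rcf_digit (oocf_T x) 1 \<ge> 1" using digit1_ge[OF vp(1)] .
    have "oocf_conv x 1 = psi a e (Iv (oocf_T x) 1 1)" using conv1[of x] ae Iv_one by simp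
    then show "\<exists>n\<ge>1. \<exists>j. 1 \<le> j \<and> j \<le> rcf_digit x n \<and> oocf_conv x (Suc 0) = Iv x n j"
      using psi_case[OF vp(1) conjunct1[OF v] vp(2) _ _ d1] by simp
  qed
next
  case (Suc k)
  show ?case
  proof (intro allI impI)
    fix x assume x: "irr01 x"
    obtain a e where ae: "oocf_digit x 1 = (a, e)" by fastforce
    have v: "(a, e) \<in> oocf_D \<and> x \<in> oocf_B a e" using digit1[OF x] ae by simp
    have vp: "irr01 (oocf_T x)" "x = psi a e (oocf_T x)" using valid_props[OF x v] by auto
    obtain n j where nj: "n \<ge> 1" "1 \<le> j" "j \<le> rcf_digit (oocf_T x) n"
      "oocf_conv (oocf_T x) (Suc k) = Iv (oocf_T x) n j"
      using Suc.IH vp(1) by blast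
    have "oocf_conv x (Suc (Suc k)) = psi a e (Iv (oocf_T x) n j)" using convSS[of x k] ae nj(4) by simp
    then show "\<exists>n\<ge>1. \<exists>j. 1 \<le> j \<and> j \<le> rcf_digit x n \<and> oocf_conv x (Suc (Suc k)) = Iv x n j"
      using psi_case[OF vp(1) conjunct1[OF v] vp(2) nj(1-3)] by simp
  qed
qed

theorem theorem5p2:
  fixes x :: real and k :: nat
  assumes "0 < x" and "x < 1" and "x \<notin> \<rat>" and "k \<ge> 1"
  shows "\<exists>n\<ge>1. \<exists>j::nat. 1 \<le> j \<and> j \<le> rcf_digit x n \<and>
           oocf_conv x k =
             real_of_int (rcfP x (n - 1) + int j * rcfP x n) /
             real_of_int (rcfQ x (n - 1) + int j * rcfQ x n)"
proof -
  have x: "irr01 x" using assms by (simp add: irr01_def)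
  obtain k0 where k: "k = Suc k0" using assms(4) by (cases k) auto
  show ?thesis using main_ind[of k0] x k unfolding Iv_def by simp
qed


end
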